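(* Let $H$ be a hexagonal system with a perfect matching. The edges of $H$ fall into three classes of mutually parallel edges (the three edge directions of the hexagonal lattice); let $S$ be one of these classes of minimum cardinality. Then $cf(H)\le |S|$.
   Context: A hexagonal system (HS) is a finite 2-connected plane graph in which every interior face is a regular hexagon of the hexagonal lattice. For a graph $G$ with a perfect matching and a perfect matching $M$ of $G$, a forcing set of $M$ is a subset of $M$ contained in no other perfect matching of $G$. A complete forcing set of $G$ is a set $S\subseteq E(G)$ such that $S\cap M$ is a forcing set of $M$ for every perfect matching $M$ of $G$; $cf(G)$ is the minimum cardinality of a complete forcing set of $G$. *)

theory Defs
  imports Main
begin

text \<open>This is the honeycomb lattice up to a homeomorphism of the plane.\<close>

type_synonym vert = "int \<times> int"
type_synonym edge = "vert set"

definition lattice_edge :: "edge \<Rightarrow> bool" where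
  "lattice_edge e \<longleftrightarrow>
     (\<exists>x y. e = {(x,y),(x+1,y)}) \<or> (\<exists>x y. even (x+y) \<and> e = {(x,y),(x,y+1)})"

definition edge_class :: "nat \<Rightarrow> edge set" where
  "edge_class i =
    (if i = 0 then {e. \<exists>x y. even (x+y) \<and> e = {(x,y),(x,y+1)}}
     else if i = 1 then {e. \<exists>x y. even (x+y) \<and> e = {(x,y),(x+1,y)}}
     else {e. \<exists>x y. odd (x+y) \<and> e = {(x,y),(x+1,y)}})"

text \<open>Hexagonal cells (faces of the lattice), indexed by their lower left corner (x,y)
  with x+y even.\<close>

definition lattice_cell :: "int \<times> int \<Rightarrow> bool" where
  "lattice_cell c \<longleftrightarrow> even (fst c + snd c)"

definition cell_edges :: "int \<times> int \<Rightarrow> edge set" where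
  "cell_edges c = (case c of (x,y) \<Rightarrow>
     {{(x,y),(x+1,y)}, {(x+1,y),(x+2,y)}, {(x+2,y),(x+2,y+1)},
      {(x+2,y+1),(x+1,y+1)}, {(x+1,y+1),(x,y+1)}, {(x,y+1),(x,y)}})"

definition verts :: "edge set \<Rightarrow> vert set" where
  "verts E = \<Union>E"

definition connected_on :: "edge set \<Rightarrow> vert set \<Rightarrow> bool" where
  "connected_on E V \<longleftrightarrow>
     (\<forall>u\<in>V. \<forall>v\<in>V. (u, v) \<in> ({(a,b). a \<in> V \<and> b \<in> V \<and> {a,b} \<in> E})\<^sup>*)"

definition two_connected :: "edge set \<Rightarrow> bool" where
  "two_connected E \<longleftrightarrow> card (verts E) \<ge> 3 \<and> connected_on E (verts E) \<and>
     (\<forall>w\<in>verts E. connected_on E (verts E - {w}))"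

text \<open>Two cells lie in the same face of the plane graph with edge set E iff they are
  joined by a chain of cells consecutive ones of which share a lattice edge not in E.\<close>

definition face_step :: "edge set \<Rightarrow> ((int \<times> int) \<times> (int \<times> int)) set" where
  "face_step E = {(c, d). lattice_cell c \<and> lattice_cell d \<and> c \<noteq> d \<and>
                   (\<exists>e \<in> cell_edges c \<inter> cell_edges d. e \<notin> E)}"

definition face_of :: "edge set \<Rightarrow> int \<times> int \<Rightarrow> (int \<times> int) set" where
  "face_of E c = {d. (c, d) \<in> (face_step E)\<^sup>*}"

text \<open>Hexagonal system: a finite 2-connected subgraph of the hexagonal lattice
  (with the inherited plane embedding) all of whose interior (bounded) faces are single
  hexagons of the lattice.\<close>

definition hexagonal_system :: "edge set \<Rightarrow> bool" where
  "hexagonal_system E \<longleftrightarrow> finite E \<and> (\<forall>e\<in>E. lattice_edge e) \<and> two_connected E \<and>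
     (\<forall>c. lattice_cell c \<and> finite (face_of E c) \<longrightarrow> face_of E c = {c})"

definition perfect_matching :: "edge set \<Rightarrow> edge set \<Rightarrow> bool" where
  "perfect_matching E M \<longleftrightarrow> M \<subseteq> E \<and>
     (\<forall>v\<in>verts E. \<exists>!e. e \<in> M \<and> v \<in> e)"

definition forcing_set :: "edge set \<Rightarrow> edge set \<Rightarrow> edge set \<Rightarrow> bool" where
  "forcing_set E M T \<longleftrightarrow> T \<subseteq> M \<and>
     (\<forall>M'. perfect_matching E M' \<and> T \<subseteq> M' \<longrightarrow> M' = M)"

definition complete_forcing_set :: "edge set \<Rightarrow> edge set \<Rightarrow> bool" where
  "complete_forcing_set E S \<longleftrightarrow> S \<subseteq> E \<and>
     (\<forall>M. perfect_matching E M \<longrightarrow> forcing_set E M (S \<inter> M))"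

definition cf :: "edge set \<Rightarrow> nat" where
  "cf E = (LEAST k. \<exists>S. complete_forcing_set E S \<and> card S = k)"

end

theory Submission
  imports Defs
begin

lemma lattice_edge_pair: "lattice_edge e \<Longrightarrow> u \<in> e \<Longrightarrow> \<exists>v. e = {u,v}"
  unfolding lattice_edge_def by auto

lemma lattice_edge_finite: "lattice_edge e \<Longrightarrow> finite e"
  unfolding lattice_edge_def by auto

lemma nbr: assumes "lattice_edge {(x,y),v}"
  shows "v = (x+1,y) \<or> v = (x-1,y) \<or> (even(x+y) \<and> v = (x,y+1)) \<or> (odd(x+y) \<and> v = (x,y-1))"
proof -
  from assms consider (h) a b where "{(x,y),v} = {(a,b),(a+1,b)}"
    | (v) a b where "even (a+b)" "{(x,y),v} = {(a,b),(a,b+1)}"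
    unfolding lattice_edge_def by blast
  then show ?thesis
  proof cases
    case h
    then show ?thesis unfolding doubleton_eq_iff by auto
  next
    case v
    then consider "x = a" "y = b" "v = (a,b+1)" | "x = a" "y = b+1" "v = (a,b)"
      unfolding doubleton_eq_iff by auto
    then show ?thesis
    proof cases
      case 1 then show ?thesis using v by simp
    next
      case 2
      have "odd (x+y)" using 2 v(1) by simp
      then show ?thesis using 2 by simp
    qed
  qed
qed

lemma ec0: "edge_class 0 = {e. \<exists>x y. even (x+y) \<and> e = {(x,y),(x,y+1)}}"
  unfolding edge_class_def by simp
lemma ec1: "edge_class 1 = {e. \<exists>x y. even (x+y) \<and> e = {(x,y),(x+1,y)}}"
  unfolding edge_class_def by simp
lemma ec2: "i \<ge> 2 \<Longrightarrow> edge_class i = {e. \<exists>x y. odd (x+y) \<and> e = {(x,y),(x+1,y)}}"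
  unfolding edge_class_def by simp

lemma edge_class_iff: "{(x,y),v} \<in> edge_class i \<longleftrightarrow>
   (i=0 \<and> (even(x+y) \<and> v=(x,y+1) \<or> odd(x+y) \<and> v=(x,y-1))) \<or>
   (i=1 \<and> (even(x+y) \<and> v=(x+1,y) \<or> odd(x+y) \<and> v=(x-1,y))) \<or>
   (i\<ge>2 \<and> (odd(x+y) \<and> v=(x+1,y) \<or> even(x+y) \<and> v=(x-1,y)))"
proof -
  have e: "\<And>a b. {(x,y),v} = {(a,b),(a,b+1)} \<longleftrightarrow> (x=a \<and> y=b \<and> v=(a,b+1) \<or> x=a \<and> y=b+1 \<and> v=(a,b))"
    unfolding doubleton_eq_iff by auto
  have h: "\<And>a b. {(x,y),v} = {(a,b),(a+1,b)} \<longleftrightarrow> (x=a \<and> y=b \<and> v=(a+1,b) \<or> x=a+1 \<and> y=b \<and> v=(a,b))"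
    unfolding doubleton_eq_iff by auto
  have c0: "{(x,y),v} \<in> edge_class 0 \<longleftrightarrow> (even(x+y) \<and> v=(x,y+1) \<or> odd(x+y) \<and> v=(x,y-1))"
  proof
    assume "{(x,y),v} \<in> edge_class 0"
    then obtain a b where ab: "even (a+b)" "{(x,y),v} = {(a,b),(a,b+1)}"
      unfolding ec0 by blast
    note ab = ab(1) ab(2)[unfolded e]
    show "even(x+y) \<and> v=(x,y+1) \<or> odd(x+y) \<and> v=(x,y-1)"
      using ab(2) proof
      assume "x=a \<and> y=b \<and> v=(a,b+1)" then show ?thesis using ab(1) by simp
    next
      assume a: "x=a \<and> y=b+1 \<and> v=(a,b)"
      then have "odd (x+y)" using ab(1) by simp
      then show ?thesis using a by simp
    qed
  next
    assume "even(x+y) \<and> v=(x,y+1) \<or> odd(x+y) \<and> v=(x,y-1)"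
    then show "{(x,y),v} \<in> edge_class 0"
    proof
      assume "even(x+y) \<and> v=(x,y+1)" then show ?thesis unfolding ec0 by auto
    next
      assume a: "odd(x+y) \<and> v=(x,y-1)"
      then have "even (x + (y-1))" by simp
      moreover have "{(x,y),v} = {(x,y-1),(x,y-1+1)}" using a by auto
      ultimately show ?thesis unfolding ec0 by blast
    qed
  qed
  have c12: "{(x,y),v} \<in> {e. \<exists>a b. P (a+b) \<and> e = {(a,b),(a+1,b)}} \<longleftrightarrow> (P(x+y) \<and> v=(x+1,y) \<or> P(x+y-1) \<and> v=(x-1,y))" for P
  proof
    assume "{(x,y),v} \<in> {e. \<exists>a b. P (a+b) \<and> e = {(a,b),(a+1,b)}}"
    then obtain a b where ab: "P (a+b)" "{(x,y),v} = {(a,b),(a+1,b)}"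
      by blast
    note ab = ab(1) ab(2)[unfolded h]
    show "P(x+y) \<and> v=(x+1,y) \<or> P(x+y-1) \<and> v=(x-1,y)"
      using ab(2) proof
      assume "x=a \<and> y=b \<and> v=(a+1,b)" then show ?thesis using ab(1) by simp
    next
      assume a: "x=a+1 \<and> y=b \<and> v=(a,b)"
      then have "x+y-1 = a+b" by simp
      then show ?thesis using a ab(1) by simp
    qed
  next
    assume "P(x+y) \<and> v=(x+1,y) \<or> P(x+y-1) \<and> v=(x-1,y)"
    then show "{(x,y),v} \<in> {e. \<exists>a b. P (a+b) \<and> e = {(a,b),(a+1,b)}}"
    proof
      assume "P(x+y) \<and> v=(x+1,y)" then show ?thesis unfolding h by auto
    next
      assume a: "P(x+y-1) \<and> v=(x-1,y)"
      then have "P ((x-1) + y)" by (simp add: algebra_simps)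
      moreover have "{(x,y),v} = {(x-1,y),(x-1+1,y)}" using a by auto
      ultimately show ?thesis by blast
    qed
  qed
  have c1: "{(x,y),v} \<in> edge_class 1 \<longleftrightarrow> (even(x+y) \<and> v=(x+1,y) \<or> odd(x+y) \<and> v=(x-1,y))"
    using c12[of even] unfolding ec1 by simp
  have c2: "i \<ge> 2 \<Longrightarrow> {(x,y),v} \<in> edge_class i \<longleftrightarrow> (odd(x+y) \<and> v=(x+1,y) \<or> even(x+y) \<and> v=(x-1,y))"
    using c12[of odd] unfolding ec2 by simp
  consider "i = 0" | "i = 1" | "i \<ge> 2" by linarith
  then show ?thesis
  proof cases
    case 1 then show ?thesis using c0 by simp
  next
    case 2 
    then have "\<not> i \<ge> 2" "i \<noteq> 0" by auto
    then show ?thesis using c1 2 by (simp only: simp_thms)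
  next
    case 3 then show ?thesis using c2 by simp
  qed
qed

lemma extremal:
  fixes f g :: "'a \<Rightarrow> int"
  assumes "finite V" "V \<noteq> {}"
  shows "\<exists>u\<in>V. (\<forall>v\<in>V. f v \<le> f u) \<and> (\<forall>v\<in>V. f v = f u \<longrightarrow> g u \<le> g v)"
proof -
  define c where "c = Max (f ` V)"
  have c: "\<forall>v\<in>V. f v \<le> c" "c \<in> f ` V" using assms unfolding c_def by auto
  define W where "W = {v\<in>V. f v = c}"
  have W: "finite W" "W \<noteq> {}" using assms c unfolding W_def by auto
  obtain u where u: "u \<in> W" "g u = Min (g ` W)" using W
    by (metis (no_types, lifting) Min_in finite_imageI image_iff image_is_empty)
  have "\<forall>v\<in>W. g u \<le> g v" using u W by auto
  moreover have "u \<in> V" "f u = c" using u unfolding W_def by auto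
  ultimately show ?thesis using c unfolding W_def by (intro bexI[of _ u]) auto
qed

lemma infinite_path:
  fixes h :: "nat \<Rightarrow> int \<times> int"
  assumes "inj h" "\<forall>k. h k \<in> V" "finite V"
  shows False
proof -
  have "range h \<subseteq> V" using assms by auto
  then have "finite (range h)" using assms finite_subset by auto
  then show False using assms(1) by (simp add: finite_image_iff)
qed

locale alt =
  fixes P Q :: "edge set" and i :: nat
  assumes PQ: "\<And>u v. {u,v}\<in>P \<Longrightarrow> \<exists>w. {u,w}\<in>Q"
    and QP: "\<And>u w. {u,w}\<in>Q \<Longrightarrow> \<exists>v. {u,v}\<in>P"
    and disj: "\<And>e. e\<in>P \<Longrightarrow> e\<notin>Q"
    and latP: "\<And>e. e\<in>P \<Longrightarrow> lattice_edge e"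
    and latQ: "\<And>e. e\<in>Q \<Longrightarrow> lattice_edge e"
    and cls: "\<And>e. e\<in>P \<Longrightarrow> e \<notin> edge_class i"
    and fin: "finite (\<Union>P)"
    and ne: "P \<noteq> {}"
begin

lemma inV: "{u,v}\<in>P \<Longrightarrow> u \<in> \<Union>P \<and> v \<in> \<Union>P" by auto

lemma inVQ: "{u,w}\<in>Q \<Longrightarrow> w \<in> \<Union>P"
  using QP[of w u] by (auto simp: insert_commute)

lemma Vnb: "u \<in> \<Union>P \<Longrightarrow> \<exists>v. {u,v}\<in>P"
  using latP lattice_edge_pair by fastforce

lemma Vne: "\<Union>P \<noteq> {}"
  using ne latP unfolding lattice_edge_def by fastforce

lemma nbP: "{(x,y),v} \<in> P \<Longrightarrow> (v = (x+1,y) \<or> v = (x-1,y) \<or> (even(x+y) \<and> v = (x,y+1)) \<or> (odd(x+y) \<and> v = (x,y-1)))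
     \<and> \<not>((i=0 \<and> (even(x+y) \<and> v=(x,y+1) \<or> odd(x+y) \<and> v=(x,y-1))) \<or>
   (i=1 \<and> (even(x+y) \<and> v=(x+1,y) \<or> odd(x+y) \<and> v=(x-1,y))) \<or>
   (i\<ge>2 \<and> (odd(x+y) \<and> v=(x+1,y) \<or> even(x+y) \<and> v=(x-1,y))))"
  using nbr[OF latP] cls edge_class_iff by blast

lemma nbQ: "{(x,y),v} \<in> Q \<Longrightarrow> v = (x+1,y) \<or> v = (x-1,y) \<or> (even(x+y) \<and> v = (x,y+1)) \<or> (odd(x+y) \<and> v = (x,y-1))"
  using nbr[OF latQ] by blast

lemma case0: assumes "i = 0" shows False
proof -
  obtain u where u: "u \<in> \<Union>P" "\<forall>v\<in>\<Union>P. snd v \<le> snd u" "\<forall>v\<in>\<Union>P. snd v = snd u \<longrightarrow> fst u \<le> fst v"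
    using extremal[OF fin Vne, of snd fst] by blast
  obtain x0 y0 where u0: "u = (x0,y0)" by fastforce
  have top: "\<And>a b. (a,b) \<in> \<Union>P \<Longrightarrow> b \<le> y0 \<and> (b = y0 \<longrightarrow> x0 \<le> a)"
    using u u0 by fastforce
  have R0: "odd (x0+y0) \<and> {(x0,y0),(x0+1,y0)} \<in> P"
  proof -
    obtain v where v: "{(x0,y0),v}\<in>P" using Vnb u u0 by blast
    obtain w where w: "{(x0,y0),w}\<in>Q" using PQ v by blast
    have vw: "v \<noteq> w" using v w disj by blast
    obtain a b where ab: "v = (a,b)" by fastforce
    obtain c d where cd: "w = (c,d)" by fastforce
    have tv: "b \<le> y0 \<and> (b = y0 \<longrightarrow> x0 \<le> a)" using top inV v ab by blast
    have tw: "d \<le> y0 \<and> (d = y0 \<longrightarrow> x0 \<le> c)" using top inVQ w cd by blast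
    have v1: "v = (x0+1,y0)" using nbP[OF v] assms tv ab by auto
    show ?thesis using nbQ[OF w] tw cd vw v1 v by auto
  qed
  have R: "odd (x0+2*int k+y0) \<and> {(x0+2*int k,y0),(x0+2*int k+1,y0)} \<in> P" for k
  proof (induction k)
    case 0 then show ?case using R0 by simp
  next
    case (Suc k)
    define a where "a = x0+2*int k"
    have h: "odd (a+y0)" "{(a,y0),(a+1,y0)} \<in> P" using Suc a_def by auto
    have hb: "{(a+1,y0),(a,y0)} \<in> P" using h by (simp add: insert_commute)
    obtain w where w: "{(a+1,y0),w}\<in>Q" using PQ hb by blast
    have "w \<noteq> (a,y0)" using w hb disj by blast
    moreover obtain c d where cd: "w = (c,d)" by fastforce
    moreover have "d \<le> y0" using top inVQ w cd by blast
    ultimately have w2: "w = (a+2,y0)" using nbQ[OF w] h(1) by auto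
    have w2': "{(a+2,y0),(a+1,y0)} \<in> Q" using w w2 by (simp add: insert_commute)
    obtain z where z: "{(a+2,y0),z}\<in>P" using QP w2' by blast
    have "z \<noteq> (a+1,y0)" using z w2' disj by blast
    then have "z = (a+3,y0)" using nbP[OF z] h(1) assms by auto
    then show ?case using z h(1) unfolding a_def by (simp add: algebra_simps)
  qed
  have "inj (\<lambda>k::nat. (x0+2*int k,y0))" by (auto simp: inj_def)
  moreover have "\<forall>k. (x0+2*int k,y0) \<in> \<Union>P" using R inV by blast
  ultimately show False using infinite_path fin by blast
qed


lemma case1: assumes "i = 1" shows False
proof -
  define F where "F = (\<lambda>(a::int,b::int). a - b + (if odd (a+b) then 1 else 0))"
  define G where "G = (\<lambda>(a::int,b::int). a + b)"
  obtain u where u: "u \<in> \<Union>P" "\<forall>v\<in>\<Union>P. F v \<le> F u" "\<forall>v\<in>\<Union>P. F v = F u \<longrightarrow> G u \<le> G v"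
    using extremal[OF fin Vne, of F G] by blast
  obtain x0 y0 where u0: "u = (x0,y0)" by fastforce
  have top: "\<And>a b. (a,b) \<in> \<Union>P \<Longrightarrow> F (a,b) \<le> F (x0,y0) \<and> (F (a,b) = F (x0,y0) \<longrightarrow> G (x0,y0) \<le> G (a,b))"
    using u u0 by fastforce
  have R0: "odd (x0+y0) \<and> {(x0,y0),(x0+1,y0)} \<in> P"
  proof -
    obtain v where v: "{(x0,y0),v}\<in>P" using Vnb u u0 by blast
    obtain w where w: "{(x0,y0),w}\<in>Q" using PQ v by blast
    have vw: "v \<noteq> w" using v w disj by blast
    obtain a b where ab: "v = (a,b)" by fastforce
    obtain c d where cd: "w = (c,d)" by fastforce
    have tv: "F (a,b) \<le> F (x0,y0) \<and> (F (a,b) = F (x0,y0) \<longrightarrow> G (x0,y0) \<le> G (a,b))" using top inV v ab by blast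
    have tw: "F (c,d) \<le> F (x0,y0) \<and> (F (c,d) = F (x0,y0) \<longrightarrow> G (x0,y0) \<le> G (c,d))" using top inVQ w cd by blast
    have od: "odd (x0+y0)"
    proof (rule ccontr)
      assume ev: "\<not> odd (x0+y0)"
      have "v = (x0,y0+1)" using nbP[OF v] assms tv ab ev unfolding F_def G_def by auto
      moreover have "w = (x0,y0+1)" using nbQ[OF w] tw cd ev unfolding F_def G_def by auto
      ultimately show False using vw by simp
    qed
    have v1: "v = (x0+1,y0)" using nbP[OF v] assms tv ab od unfolding F_def G_def by auto
    show ?thesis using v1 v od by auto
  qed
  have R: "{(x0+int k,y0+int k),(x0+int k+1,y0+int k)} \<in> P" for k
  proof (induction k)
    case 0 then show ?case using R0 by simp
  next
    case (Suc k)
    define a where "a = x0+int k"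
    define b where "b = y0+int k"
    have h: "odd (a+b)" "{(a,b),(a+1,b)} \<in> P" using Suc R0 unfolding a_def b_def by (auto simp: algebra_simps)
    have ft: "F (a,b) = F (x0,y0)" "G (a,b) = G (x0,y0) + 2*int k" using R0 unfolding a_def b_def F_def G_def by (auto simp: algebra_simps)
    have hb: "{(a+1,b),(a,b)} \<in> P" using h by (simp add: insert_commute)
    obtain w where w: "{(a+1,b),w}\<in>Q" using PQ hb by blast
    have "w \<noteq> (a,b)" using w hb disj by blast
    moreover obtain c d where cd: "w = (c,d)" by fastforce
    moreover have "F (c,d) \<le> F (x0,y0)" using top inVQ w cd by blast
    ultimately have w2: "w = (a+1,b+1)" using nbQ[OF w] h(1) ft unfolding F_def by auto
    have w2': "{(a+1,b+1),(a+1,b)} \<in> Q" using w w2 by (simp add: insert_commute)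
    obtain z where z: "{(a+1,b+1),z}\<in>P" using QP w2' by blast
    have "z \<noteq> (a+1,b)" using z w2' disj by blast
    then have "z = (a+2,b+1)" using nbP[OF z] h(1) assms by auto
    then show ?case using z unfolding a_def b_def by (simp add: algebra_simps)
  qed
  have "inj (\<lambda>k::nat. (x0+int k,y0+int k))" by (auto simp: inj_def)
  moreover have "\<forall>k. (x0+int k,y0+int k) \<in> \<Union>P" using R inV by blast
  ultimately show False using infinite_path fin by blast
qed

lemma case2: assumes "i = 2" shows False
proof -
  define F where "F = (\<lambda>(a::int,b::int). (if odd (a+b) then 1 else 0) - a - b)"
  define G where "G = (\<lambda>(a::int,b::int). b - a)"
  obtain u where u: "u \<in> \<Union>P" "\<forall>v\<in>\<Union>P. F v \<le> F u" "\<forall>v\<in>\<Union>P. F v = F u \<longrightarrow> G u \<le> G v"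
    using extremal[OF fin Vne, of F G] by blast
  obtain x0 y0 where u0: "u = (x0,y0)" by fastforce
  have top: "\<And>a b. (a,b) \<in> \<Union>P \<Longrightarrow> F (a,b) \<le> F (x0,y0) \<and> (F (a,b) = F (x0,y0) \<longrightarrow> G (x0,y0) \<le> G (a,b))"
    using u u0 by fastforce
  have R0: "odd (x0+y0) \<and> {(x0,y0),(x0-1,y0)} \<in> P"
  proof -
    obtain v where v: "{(x0,y0),v}\<in>P" using Vnb u u0 by blast
    obtain w where w: "{(x0,y0),w}\<in>Q" using PQ v by blast
    have vw: "v \<noteq> w" using v w disj by blast
    obtain a b where ab: "v = (a,b)" by fastforce
    obtain c d where cd: "w = (c,d)" by fastforce
    have tv: "F (a,b) \<le> F (x0,y0) \<and> (F (a,b) = F (x0,y0) \<longrightarrow> G (x0,y0) \<le> G (a,b))" using top inV v ab by blast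
    have tw: "F (c,d) \<le> F (x0,y0) \<and> (F (c,d) = F (x0,y0) \<longrightarrow> G (x0,y0) \<le> G (c,d))" using top inVQ w cd by blast
    have od: "odd (x0+y0)"
    proof (rule ccontr)
      assume ev: "\<not> odd (x0+y0)"
      have "v = (x0,y0+1)" using nbP[OF v] assms tv ab ev unfolding F_def G_def by auto
      moreover have "w = (x0,y0+1)" using nbQ[OF w] tw cd ev unfolding F_def G_def by auto
      ultimately show False using vw by simp
    qed
    have v1: "v = (x0-1,y0)" using nbP[OF v] assms tv ab od unfolding F_def G_def by auto
    show ?thesis using v1 v od by auto
  qed
  have R: "{(x0-int k,y0+int k),(x0-int k-1,y0+int k)} \<in> P" for k
  proof (induction k)
    case 0 then show ?case using R0 by simp
  next
    case (Suc k)
    define a where "a = x0-int k"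
    define b where "b = y0+int k"
    have h: "odd (a+b)" "{(a,b),(a-1,b)} \<in> P" using Suc R0 unfolding a_def b_def by (auto simp: algebra_simps)
    have ft: "F (a,b) = F (x0,y0)" "G (a,b) = G (x0,y0) + 2*int k" using R0 unfolding a_def b_def F_def G_def by (auto simp: algebra_simps)
    have hb: "{(a-1,b),(a,b)} \<in> P" using h by (simp add: insert_commute)
    obtain w where w: "{(a-1,b),w}\<in>Q" using PQ hb by blast
    have "w \<noteq> (a,b)" using w hb disj by blast
    moreover obtain c d where cd: "w = (c,d)" by fastforce
    moreover have "F (c,d) \<le> F (x0,y0)" using top inVQ w cd by blast
    ultimately have w2: "w = (a-1,b+1)" using nbQ[OF w] h(1) ft unfolding F_def by auto
    have w2': "{(a-1,b+1),(a-1,b)} \<in> Q" using w w2 by (simp add: insert_commute)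
    obtain z where z: "{(a-1,b+1),z}\<in>P" using QP w2' by blast
    have "z \<noteq> (a-1,b)" using z w2' disj by blast
    then have "z = (a-2,b+1)" using nbP[OF z] h(1) assms by auto
    then show ?case using z unfolding a_def b_def by (simp add: algebra_simps)
  qed
  have "inj (\<lambda>k::nat. (x0-int k,y0+int k))" by (auto simp: inj_def)
  moreover have "\<forall>k. (x0-int k,y0+int k) \<in> \<Union>P" using R inV by blast
  ultimately show False using infinite_path fin by blast
qed

end


lemma alt_false: "alt P Q i \<Longrightarrow> i < 3 \<Longrightarrow> False"
  using alt.case0 alt.case1 alt.case2 by (metis less_Suc_eq numeral_3_eq_3 One_nat_def numeral_2_eq_2 less_Suc0)

lemma pm_exists: "perfect_matching H M \<Longrightarrow> u \<in> \<Union>H \<Longrightarrow> \<exists>e. e \<in> M \<and> u \<in> e"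
  unfolding perfect_matching_def verts_def by blast

lemma pm_uniq: "perfect_matching H M \<Longrightarrow> u \<in> \<Union>H \<Longrightarrow> e1 \<in> M \<Longrightarrow> e2 \<in> M \<Longrightarrow> u \<in> e1 \<Longrightarrow> u \<in> e2 \<Longrightarrow> e1 = e2"
  unfolding perfect_matching_def verts_def by blast

lemma pm_sub: "perfect_matching H M \<Longrightarrow> M \<subseteq> H"
  unfolding perfect_matching_def by blast

lemma PQ_gen:
  assumes "perfect_matching H M" "perfect_matching H M'" "\<forall>e\<in>H. lattice_edge e"
    and "{u,v} \<in> M - M'"
  shows "\<exists>w. {u,w} \<in> M' - M"
proof -
  have uH: "u \<in> \<Union>H" using assms(4) pm_sub[OF assms(1)] by blast
  obtain e' where e': "e' \<in> M'" "u \<in> e'" using pm_exists[OF assms(2) uH] by blast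
  have "lattice_edge e'" using e' pm_sub[OF assms(2)] assms(3) by blast
  then obtain w where w: "e' = {u,w}" using lattice_edge_pair e' by blast
  have "e' \<notin> M"
  proof
    assume "e' \<in> M"
    then have "e' = {u,v}" using pm_uniq[OF assms(1) uH] e' assms(4) by blast
    then show False using e' assms(4) by blast
  qed
  then show ?thesis using e' w by blast
qed

theorem mainTheorem4:
  fixes H :: "edge set" and i :: nat
  assumes "hexagonal_system H"
    and "\<exists>M. perfect_matching H M"
    and "i < 3"
    and "\<forall>j<3. card (H \<inter> edge_class i) \<le> card (H \<inter> edge_class j)"
  shows "cf H \<le> card (H \<inter> edge_class i)"
proof -
  define S where "S = H \<inter> edge_class i"
  have finH: "finite H" and lat: "\<forall>e\<in>H. lattice_edge e"
    using assms(1) unfolding hexagonal_system_def by auto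
  have cfs: "complete_forcing_set H S"
    unfolding complete_forcing_set_def forcing_set_def
  proof (intro conjI allI impI)
    show "S \<subseteq> H" unfolding S_def by blast
    fix M M'
    assume M: "perfect_matching H M"
    show "S \<inter> M \<subseteq> M" by blast
    assume "perfect_matching H M' \<and> S \<inter> M \<subseteq> M'"
    then have M': "perfect_matching H M'" and SM: "S \<inter> M \<subseteq> M'" by auto
    show "M' = M"
    proof (rule ccontr)
      assume neq: "M' \<noteq> M"
      have ne: "M - M' \<noteq> {}"
      proof
        assume "M - M' = {}"
        then have sub: "M \<subseteq> M'" by blast
        have "M' \<subseteq> M"
        proof
          fix e' assume e': "e' \<in> M'"
          then have "lattice_edge e'" using pm_sub[OF M'] lat by blast
          then obtain u where u: "u \<in> e'" unfolding lattice_edge_def by blast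
          have uH: "u \<in> \<Union>H" using u e' pm_sub[OF M'] by blast
          obtain e where e: "e \<in> M" "u \<in> e" using pm_exists[OF M uH] by blast
          have "e = e'" using pm_uniq[OF M' uH] e sub e' u by blast
          then show "e' \<in> M" using e by simp
        qed
        then show False using sub neq by blast
      qed
      have "alt (M - M') (M' - M) i"
      proof
        show "\<And>u v. {u,v} \<in> M - M' \<Longrightarrow> \<exists>w. {u,w} \<in> M' - M"
          using PQ_gen[OF M M' lat] by blast
        show "\<And>u w. {u,w} \<in> M' - M \<Longrightarrow> \<exists>v. {u,v} \<in> M - M'"
          using PQ_gen[OF M' M lat] by blast
        show "\<And>e. e \<in> M - M' \<Longrightarrow> e \<notin> M' - M" by blast
        show "\<And>e. e \<in> M - M' \<Longrightarrow> lattice_edge e" using pm_sub[OF M] lat by blast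
        show "\<And>e. e \<in> M' - M \<Longrightarrow> lattice_edge e" using pm_sub[OF M'] lat by blast
        show "\<And>e. e \<in> M - M' \<Longrightarrow> e \<notin> edge_class i" using SM pm_sub[OF M] unfolding S_def by blast
        have "finite (\<Union>H)" using finH lat lattice_edge_finite by blast
        moreover have "\<Union>(M - M') \<subseteq> \<Union>H" using pm_sub[OF M] by blast
        ultimately show "finite (\<Union>(M - M'))" using finite_subset by blast
        show "M - M' \<noteq> {}" by fact
      qed
      then show False using alt_false assms(3) by blast
    qed
  qed
  have "cf H \<le> card S" unfolding cf_def by (rule Least_le) (use cfs in blast)
  then show ?thesis unfolding S_def .
qed

end
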